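(* Let $D$ be a Newton diagram in $2$ variables whose support is exactly $K=\{(a,b)\in\mathbb N_0^2: a+b<d\}$ for some integer $d\ge1$. Then $\#(D)\ge\frac{d+5}{2}$.
   Context: For $m\in\mathbb Z^n$ write $|m|=m_1+\dots+m_n$; $e_1,\dots,e_n$ is the standard basis. A Newton diagram in $n$ variables is a function $D\colon\mathbb Z^n\to\{0,P,N\}$ ($P,N$ formal symbols) whose support $K=D^{-1}(\{P,N\})$ is a finite nonempty subset of $\mathbb N_0^n$. For $a\in\mathbb Z^n$ let $E(a)=\{a,a-e_1,\dots,a-e_n\}$; $E(a)$ is a node of $D$ if the image $D(E(a))$ equals $\{P\}$, $\{N\}$, $\{0,P\}$ or $\{0,N\}$. $\#(D)$ is the number of $a\in\mathbb Z^n$ for which $E(a)$ is a node. *)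

theory Defs
  imports Main
begin

text \<open>Values of a Newton diagram: 0 and the formal symbols P, N.\<close>
datatype sgn = Z | P | N

text \<open>Points of Z^n are integer lists of length n. e i is the i-th standard basis vector.\<close>
definition unitvec :: "nat \<Rightarrow> nat \<Rightarrow> int list" where
  "unitvec n i = map (\<lambda>j. if j = i then 1 else 0) [0..<n]"

definition vsub :: "int list \<Rightarrow> int list \<Rightarrow> int list" where
  "vsub a b = map2 (-) a b"

definition supp :: "(int list \<Rightarrow> sgn) \<Rightarrow> int list set" where
  "supp D = {m. D m \<in> {P, N}}"

text \<open>D is a Newton diagram in n variables (D is only evaluated on lists of length n;
  its values elsewhere are irrelevant, so we require them to be Z).\<close>
definition newton_diagram :: "nat \<Rightarrow> (int list \<Rightarrow> sgn) \<Rightarrow> bool" where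
  "newton_diagram n D \<longleftrightarrow>
     (\<forall>m. D m \<noteq> Z \<longrightarrow> length m = n \<and> (\<forall>x\<in>set m. x \<ge> 0))
     \<and> finite (supp D) \<and> supp D \<noteq> {}"

definition Eset :: "nat \<Rightarrow> int list \<Rightarrow> int list set" where
  "Eset n a = insert a {vsub a (unitvec n i) | i. i < n}"

definition is_node :: "nat \<Rightarrow> (int list \<Rightarrow> sgn) \<Rightarrow> int list \<Rightarrow> bool" where
  "is_node n D a \<longleftrightarrow> D ` Eset n a \<in> {{P}, {N}, {Z, P}, {Z, N}}"

definition num_nodes :: "nat \<Rightarrow> (int list \<Rightarrow> sgn) \<Rightarrow> nat" where
  "num_nodes n D = card {a. length a = n \<and> is_node n D a}"

end

theory Submission
  imports Defs
begin

lemma trip_iff: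
  "({u,v,w} \<in> {{P},{N},{Z,P},{Z,N}}) \<longleftrightarrow>
   (u \<noteq> Z \<or> v \<noteq> Z \<or> w \<noteq> Z) \<and> (u \<noteq> Z \<longrightarrow> v \<noteq> Z \<longrightarrow> u = v)
   \<and> (u \<noteq> Z \<longrightarrow> w \<noteq> Z \<longrightarrow> u = w) \<and> (v \<noteq> Z \<longrightarrow> w \<noteq> Z \<longrightarrow> v = w)"
  by (cases u; cases v; cases w) (auto simp: insert_commute doubleton_eq_iff)

lemma eset2: "Eset 2 [x,y] = {[x,y],[x-1,y],[x,y-1]}"
proof -
  have "{vsub [x,y] (unitvec 2 i) | i. i < 2} = {[x-1,y],[x,y-1]}"
    by (auto simp: vsub_def unitvec_def less_Suc_eq numeral_2_eq_2)
  then show ?thesis by (simp add: Eset_def)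
qed

lemma isnode2: "is_node 2 D [x,y] \<longleftrightarrow> {D [x,y], D [x-1,y], D [x,y-1]} \<in> {{P},{N},{Z,P},{Z,N}}"
  by (simp add: is_node_def eset2)

lemma card_filter: "finite A \<Longrightarrow> card {j\<in>A. Q j} = (\<Sum>j\<in>A. of_bool (Q j))"
  by (simp add: sum.If_cases Int_def)

lemma nz_eq: "u \<noteq> Z \<Longrightarrow> v \<noteq> Z \<Longrightarrow> (u = v) = ((u = P) = (v = P))"
  by (cases u; cases v) auto

lemma sum_split_ends:
  fixes g :: "nat \<Rightarrow> 'a::comm_monoid_add"
  assumes "k \<ge> 1"
  shows "sum g {..k} = g 0 + sum g {1..<k} + g k"
proof -
  have "{..k} = insert 0 (insert k {1..<k})" using assms by auto
  then show ?thesis using assms by (simp add: algebra_simps)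
qed

lemma sum_shift1: "sum (h::nat\<Rightarrow>'a::comm_monoid_add) {1..<n} = (\<Sum>i<n-1. h (Suc i))"
proof (cases n)
  case 0 then show ?thesis by simp
next
  case (Suc n')
  then show ?thesis using sum.shift_bounds_Suc_ivl[of h 0 n'] by (simp add: lessThan_atLeast0)
qed

lemma strip1d:
  fixes b c :: "nat \<Rightarrow> bool"
  assumes "m \<ge> 1"
  shows "2 * (of_bool (b 0 = c 0) + (\<Sum>j\<in>{1..<m}. of_bool (b j = c (j-1) \<and> c j = c (j-1))))
     + (\<Sum>i<m-1. of_bool (c i \<noteq> c (Suc i))) - (\<Sum>i<m. of_bool (b i \<noteq> b (Suc i)))
     \<ge> (if b m = c (m-1) then -1 else (0::int))"
  using assms
proof (induction m rule: nat_induct_at_least)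
  case base
  then show ?case by (cases "b 0"; cases "b 1"; cases "c 0") auto
next
  case (Suc m)
  have e1: "(\<Sum>j\<in>{1..<Suc m}. of_bool (b j = c (j-1) \<and> c j = c (j-1))) =
     (\<Sum>j\<in>{1..<m}. of_bool (b j = c (j-1) \<and> c j = c (j-1))) + (of_bool (b m = c (m-1) \<and> c m = c (m-1))::int)"
    using Suc.hyps by simp
  have e2: "(\<Sum>i<Suc m-1. of_bool (c i \<noteq> c (Suc i))) = (\<Sum>i<m-1. of_bool (c i \<noteq> c (Suc i))) + (of_bool (c (m-1) \<noteq> c m)::int)"
    using Suc.hyps by (cases m) auto
  have e3: "(\<Sum>i<Suc m. of_bool (b i \<noteq> b (Suc i))) = (\<Sum>i<m. of_bool (b i \<noteq> b (Suc i))) + (of_bool (b m \<noteq> b (Suc m))::int)"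
    by simp
  show ?case using Suc.IH unfolding e1 e2 e3
    by (cases "b m"; cases "b (Suc m)"; cases "c m"; cases "c (m-1)") auto
qed

theorem mainTheorem7:
  fixes D :: "int list \<Rightarrow> sgn" and d :: nat
  assumes "newton_diagram 2 D"
    and "d \<ge> 1"
    and "supp D = {[a, b] | a b. a \<ge> 0 \<and> b \<ge> 0 \<and> a + b < int d}"
  shows "2 * num_nodes 2 D \<ge> d + 5"
proof -
  define f where "f x y = D [x,y]" for x y
  define nd where "nd x y = is_node 2 D [x,y]" for x y
  have fnz: "f x y \<noteq> Z \<longleftrightarrow> x \<ge> 0 \<and> y \<ge> 0 \<and> x + y < int d" for x y
  proof -
    have "f x y \<noteq> Z \<longleftrightarrow> [x,y] \<in> supp D" unfolding supp_def f_def by (cases "D [x,y]") auto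
    then show ?thesis using assms(3) by auto
  qed
  have Dnz: "D a \<noteq> Z \<Longrightarrow> \<exists>x y. a = [x,y] \<and> f x y \<noteq> Z" for a
  proof -
    assume "D a \<noteq> Z"
    then have "a \<in> supp D" unfolding supp_def by (cases "D a") auto
    then show ?thesis using assms(3) fnz by auto
  qed
  have nd_iff: "nd x y \<longleftrightarrow> (f x y \<noteq> Z \<or> f (x-1) y \<noteq> Z \<or> f x (y-1) \<noteq> Z)
     \<and> (f x y \<noteq> Z \<longrightarrow> f (x-1) y \<noteq> Z \<longrightarrow> f x y = f (x-1) y)
     \<and> (f x y \<noteq> Z \<longrightarrow> f x (y-1) \<noteq> Z \<longrightarrow> f x y = f x (y-1))
     \<and> (f (x-1) y \<noteq> Z \<longrightarrow> f x (y-1) \<noteq> Z \<longrightarrow> f (x-1) y = f x (y-1))" for x y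
    unfolding nd_def isnode2 trip_iff f_def by simp
  define NS where "NS = {a. length a = 2 \<and> is_node 2 D a}"
  have NSsub: "NS \<subseteq> (\<lambda>(x,y). [x,y]) ` ({0..int d} \<times> {0..int d})"
  proof
    fix a assume "a \<in> NS"
    then have l: "length a = 2" and nd0: "is_node 2 D a" unfolding NS_def by auto
    obtain x y where a: "a = [x,y]" using l
      by (metis (no_types, lifting) One_nat_def Suc_1 length_0_conv length_Suc_conv)
    have "nd x y" using nd0 a nd_def by simp
    then have "x \<in> {0..int d} \<and> y \<in> {0..int d}" unfolding nd_iff fnz by auto
    then show "a \<in> (\<lambda>(x,y). [x,y]) ` ({0..int d} \<times> {0..int d})" using a by auto
  qed
  have finNS: "finite NS" using NSsub finite_subset by blast
  define T where "T = Sigma {..d} (\<lambda>k. {j\<in>{..k}. nd (int j) (int k - int j)})"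
  define g where "g = (\<lambda>(k::nat,j::nat). [int j, int k - int j])"
  have "inj_on g T" unfolding g_def inj_on_def T_def by auto
  moreover have "g ` T \<subseteq> NS" unfolding g_def T_def NS_def nd_def by auto
  ultimately have cT: "card T \<le> num_nodes 2 D"
    unfolding num_nodes_def NS_def[symmetric]
    by (metis card_image card_mono finNS)
  define NN where "NN k = (\<Sum>j\<le>k. of_bool (nd (int j) (int k - int j)) :: int)" for k
  have cT2: "int (card T) = (\<Sum>k\<le>d. NN k)"
    unfolding T_def NN_def by (simp add: of_nat_sum Int_def card_filter)
  define A where "A m = (\<Sum>i<m. of_bool (f (int i) (int m - int i) \<noteq> f (int i + 1) (int m - int i - 1)) :: int)" for m
  have strip: "2 * NN k + A (k-1) \<ge> A k" if k1: "k \<ge> 1" and kd: "k < d" for k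
  proof -
    define b where "b i = (f (int i) (int k - int i) = P)" for i
    define c where "c i = (f (int i) (int k - 1 - int i) = P)" for i
    have bnz: "i \<le> k \<Longrightarrow> f (int i) (int k - int i) \<noteq> Z" for i using kd fnz by simp
    have cnz: "i \<le> k - 1 \<Longrightarrow> f (int i) (int k - 1 - int i) \<noteq> Z" for i using kd k1 fnz by simp
    have ik1: "int (k-1) = int k - 1" using k1 by simp
    have n0: "nd 0 (int k - 0) = (b 0 = c 0)"
      using nz_eq[OF bnz cnz, of 0 0] k1 kd unfolding nd_iff b_def c_def by (simp add: fnz)
    have nk: "nd (int k) (int k - int k) = (b k = c (k-1))"
      using nz_eq[OF bnz cnz, of k "k-1"] k1 kd unfolding nd_iff b_def c_def by (simp add: fnz ik1)
    have nj: "nd (int j) (int k - int j) = (b j = c (j-1) \<and> c j = c (j-1))" if "j \<in> {1..<k}" for j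
    proof -
      have j: "1 \<le> j" "j < k" using that by auto
      have ij: "int (j-1) = int j - 1" using j by simp
      have e1: "f (int j - 1) (int k - int j) = f (int (j-1)) (int k - 1 - int (j-1))" using ij by simp
      have e2: "f (int j) (int k - int j - 1) = f (int j) (int k - 1 - int j)" by (simp add: algebra_simps)
      have z1: "f (int j) (int k - int j) \<noteq> Z" using j kd by (simp add: fnz)
      have z2: "f (int (j-1)) (int k - 1 - int (j-1)) \<noteq> Z" using j kd by (simp add: fnz)
      have z3: "f (int j) (int k - 1 - int j) \<noteq> Z" using j kd by (simp add: fnz)
      show ?thesis unfolding nd_iff e1 e2 b_def c_def
        using nz_eq[OF z1 z2] nz_eq[OF z1 z3] nz_eq[OF z2 z3] z1 z2 z3 by auto
    qed
    have NNk: "NN k = of_bool (b 0 = c 0) + (\<Sum>j\<in>{1..<k}. of_bool (b j = c (j-1) \<and> c j = c (j-1))) + of_bool (b k = c (k-1))"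
    proof -
      have "(\<Sum>j\<in>{1..<k}. (of_bool (nd (int j) (int k - int j))::int)) = (\<Sum>j\<in>{1..<k}. of_bool (b j = c (j-1) \<and> c j = c (j-1)))"
        by (rule sum.cong[OF refl]) (simp add: nj)
      then show ?thesis unfolding NN_def sum_split_ends[OF k1] using n0 nk by simp
    qed
    have Ak: "A k = (\<Sum>i<k. of_bool (b i \<noteq> b (Suc i)))"
      unfolding A_def
    proof (rule sum.cong[OF refl])
      fix i assume "i \<in> {..<k}"
      then have z1: "f (int i) (int k - int i) \<noteq> Z" and z2: "f (int (Suc i)) (int k - int (Suc i)) \<noteq> Z"
        using kd by (auto simp: fnz)
      show "of_bool (f (int i) (int k - int i) \<noteq> f (int i + 1) (int k - int i - 1)) = of_bool (b i \<noteq> b (Suc i))"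
        using nz_eq[OF z1 z2] unfolding b_def by (simp add: algebra_simps)
    qed
    have Ak1: "A (k-1) = (\<Sum>i<k-1. of_bool (c i \<noteq> c (Suc i)))"
      unfolding A_def
    proof (rule sum.cong[OF refl])
      fix i assume "i \<in> {..<k-1}"
      then have z1: "f (int i) (int k - 1 - int i) \<noteq> Z" and z2: "f (int (Suc i)) (int k - 1 - int (Suc i)) \<noteq> Z"
        using kd by (auto simp: fnz)
      show "of_bool (f (int i) (int (k-1) - int i) \<noteq> f (int i + 1) (int (k-1) - int i - 1)) = of_bool (c i \<noteq> c (Suc i))"
        using nz_eq[OF z1 z2] unfolding c_def ik1 by (simp add: algebra_simps)
    qed
    show ?thesis using strip1d[OF k1, of b c] unfolding NNk Ak Ak1
      by (cases "b k = c (k-1)") auto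
  qed
  have tele: "2 * (\<Sum>k\<in>{1..<m}. NN k) \<ge> A (m-1)" if "m \<ge> 1" "m \<le> d" for m
    using that
  proof (induction m rule: nat_induct_at_least)
    case base then show ?case by (simp add: A_def)
  next
    case (Suc m)
    have "2 * NN m + A (m-1) \<ge> A m" using strip[of m] Suc.prems Suc.hyps by simp
    then show ?case using Suc by simp
  qed
  have NN0: "NN 0 = 1"
    unfolding NN_def using assms(2) by (simp add: nd_iff fnz)
  define E where "E = (\<Sum>i<d-1. of_bool (f (int i) (int (d-1) - int i) = f (int i + 1) (int (d-1) - int i - 1)) :: int)"
  have EA: "E + A (d-1) = int (d-1)"
  proof -
    have "E + A (d-1) = (\<Sum>i<d-1. (1::int))"
      unfolding E_def A_def sum.distrib[symmetric] by (rule sum.cong) auto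
    then show ?thesis by simp
  qed
  have NNd: "NN d = 2 + E"
  proof -
    have ik1: "int (d-1) = int d - 1" using assms(2) by simp
    have a: "nd 0 (int d - 0)" using assms(2) by (simp add: nd_iff fnz)
    have b: "nd (int d) (int d - int d)" using assms(2) by (simp add: nd_iff fnz)
    have c: "(\<Sum>j\<in>{1..<d}. of_bool (nd (int j) (int d - int j))) = E"
      unfolding sum_shift1 E_def
    proof (rule sum.cong[OF refl])
      fix i assume "i \<in> {..<d-1}"
      then have i: "i + 1 < d" by auto
      then have z1: "f (int i) (int d - 1 - int i) \<noteq> Z" and z2: "f (int i + 1) (int d - 1 - int i - 1) \<noteq> Z"
        by (auto simp: fnz)
      have z3: "f (int i + 1) (int d - int i - 1) = Z" using fnz[of "int i + 1" "int d - int i - 1"] by simp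
      show "of_bool (nd (int (Suc i)) (int d - int (Suc i))) =
         of_bool (f (int i) (int (d-1) - int i) = f (int i + 1) (int (d-1) - int i - 1))"
        unfolding nd_iff ik1 using z1 z2 z3 by (simp add: algebra_simps)
    qed
    show ?thesis unfolding NN_def sum_split_ends[OF assms(2)] using a b c by simp
  qed
  have sumN: "(\<Sum>k\<le>d. NN k) = NN 0 + (\<Sum>k\<in>{1..<d}. NN k) + NN d"
    using sum_split_ends[OF assms(2)] by simp
  have E0: "E \<ge> 0" unfolding E_def by (rule sum_nonneg) simp
  have "2 * int (card T) \<ge> int d + 5"
    using tele[OF assms(2) order_refl] EA NN0 NNd sumN cT2 assms(2) E0 by simp
  then show ?thesis using cT by linarith
qed

end
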